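(* Let $F$ satisfy $2-\sqrt3\le F<2.4$, let $\varepsilon>0$, and consider $$P(X)=X^4-\varepsilon^2(1+F^2)X^2-2F\varepsilon X-1 .$$ Then there exists $\varepsilon_0>0$ (depending on $F$) such that for all $0<\varepsilon<\varepsilon_0$ the polynomial $P$ has exactly two real roots, a positive root $X_0^+$ and a negative root $X_0^-$, and they satisfy $$X_0^+-1\in(0,\varepsilon F),\qquad X_0^-+1\in(0,\varepsilon F).$$
   Context: This polynomial is the non-dimensional form of the dispersion relation $c^2(c^2k^2-f^2)=(c\hat f+\tilde g)^2$ for internal waves on the thermocline, via $X=c\sqrt{k/\tilde g}$, $\varepsilon=f/\sqrt{\tilde g k}$, $F=\hat f/f$, where $f=2\Omega\sin\phi$, $\hat f=2\Omega\cos\phi$ are the Coriolis parameters at latitude $\phi$, $k$ the wavenumber and $\tilde g$ the reduced gravity. The range $2-\sqrt3\le F<2.4$ corresponds to mid-latitudes (roughly $23^\circ26'16''$ to $75^\circ$), and the paper regards $\varepsilon$ as small (of order $10^{-2}$). *)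

theory Defs
  imports Complex_Main
begin

definition thermoP :: "real \<Rightarrow> real \<Rightarrow> real \<Rightarrow> real" where
  "thermoP F \<epsilon> X = X ^ 4 - \<epsilon>\<^sup>2 * (1 + F\<^sup>2) * X\<^sup>2 - 2 * F * \<epsilon> * X - 1"

end

theory Submission
  imports Defs
begin

lemma P_diff: "thermoP F e y - thermoP F e x =
  (y - x) * ((x + y) * (x\<^sup>2 + y\<^sup>2 - e\<^sup>2 * (1 + F\<^sup>2)) - 2 * F * e)"
  unfolding thermoP_def by (simp add: algebra_simps power2_eq_square power4_eq_xxxx)

lemma a_small:
  fixes F e :: real
  assumes "0 < F" "0 < e" "e * F < 1/8" "e * (1 + F\<^sup>2) < F"
  shows "e\<^sup>2 * (1 + F\<^sup>2) < 1/8"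
proof -
  have "e\<^sup>2 * (1 + F\<^sup>2) = e * (e * (1 + F\<^sup>2))" by (simp add: power2_eq_square)
  also have "\<dots> < e * F" using assms by simp
  finally show ?thesis using assms by simp
qed

lemma mono_pos:
  fixes F e x y :: real
  assumes "0 < F" "0 < e" "e * F < 1/8" "e * (1 + F\<^sup>2) < F" "1/2 \<le> x" "x < y"
  shows "thermoP F e x < thermoP F e y"
proof -
  let ?a = "e\<^sup>2 * (1 + F\<^sup>2)"
  have a: "?a < 1/8" using a_small assms by blast
  have s: "1 \<le> x + y" using assms by simp
  have q: "1/2 \<le> x\<^sup>2 + y\<^sup>2"
  proof -
    have "(1/2) * (1/2) \<le> x * x" using assms(5) by (intro mult_mono) auto
    moreover have "(1/2) * (1/2) \<le> y * y" using assms(5,6) by (intro mult_mono) auto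
    ultimately have "1/4 \<le> x\<^sup>2" "1/4 \<le> y\<^sup>2" by (auto simp: power2_eq_square)
    then show ?thesis by simp
  qed
  have "1 * (3/8) \<le> (x + y) * (x\<^sup>2 + y\<^sup>2 - ?a)"
    by (rule mult_mono) (use s q a in auto)
  moreover have "2 * F * e < 1/4" using assms(3) by (simp add: mult.commute)
  ultimately have "0 < (x + y) * (x\<^sup>2 + y\<^sup>2 - ?a) - 2 * F * e" by linarith
  then have "0 < thermoP F e y - thermoP F e x" unfolding P_diff using assms by simp
  then show ?thesis by simp
qed

lemma mono_neg:
  fixes F e x y :: real
  assumes "0 < F" "0 < e" "e * F < 1/8" "e * (1 + F\<^sup>2) < F" "y \<le> -1/2" "x < y"
  shows "thermoP F e y < thermoP F e x"
proof -
  let ?a = "e\<^sup>2 * (1 + F\<^sup>2)"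
  have a: "?a < 1/8" using a_small assms by blast
  have s: "1 \<le> -(x + y)" using assms by simp
  have q: "1/2 \<le> x\<^sup>2 + y\<^sup>2"
  proof -
    have "(1/2) * (1/2) \<le> (-x) * (-x)" using assms(5,6) by (intro mult_mono) auto
    moreover have "(1/2) * (1/2) \<le> (-y) * (-y)" using assms(5) by (intro mult_mono) auto
    ultimately have "1/4 \<le> x\<^sup>2" "1/4 \<le> y\<^sup>2" by (auto simp: power2_eq_square)
    then show ?thesis by simp
  qed
  have "1 * (3/8) \<le> (-(x + y)) * (x\<^sup>2 + y\<^sup>2 - ?a)"
    by (rule mult_mono) (use s q a in auto)
  moreover have "(-(x + y)) * (x\<^sup>2 + y\<^sup>2 - ?a) = - ((x + y) * (x\<^sup>2 + y\<^sup>2 - ?a))" by (rule mult_minus_left)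
  moreover have "0 < 2 * F * e" using assms by simp
  ultimately have "(x + y) * (x\<^sup>2 + y\<^sup>2 - ?a) - 2 * F * e < 0" by linarith
  then have "thermoP F e y - thermoP F e x < 0" unfolding P_diff using assms
    by (simp add: mult_pos_neg)
  then show ?thesis by simp
qed

lemma mid_neg:
  fixes F e x :: real
  assumes "0 < F" "0 < e" "e * F < 1/8" "\<bar>x\<bar> \<le> 1/2"
  shows "thermoP F e x < 0"
proof -
  have "\<bar>x\<bar> * \<bar>x\<bar> \<le> (1/2) * (1/2)" using assms(4) by (intro mult_mono) auto
  then have x2: "x\<^sup>2 \<le> 1/4" by (simp add: power2_eq_square abs_mult[symmetric])
  have x4: "x ^ 4 \<le> 1/16"
  proof -
    have "x ^ 4 = x\<^sup>2 * x\<^sup>2" by (simp add: power4_eq_xxxx power2_eq_square)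
    also have "\<dots> \<le> (1/4) * (1/4)" by (rule mult_mono) (use x2 in auto)
    finally show ?thesis by simp
  qed
  have t: "\<bar>2 * F * e * x\<bar> \<le> 1/8"
  proof -
    have "\<bar>2 * F * e * x\<bar> = 2 * (e * F) * \<bar>x\<bar>" using assms by (simp add: abs_mult)
    also have "\<dots> \<le> 2 * (1/8) * (1/2)" by (rule mult_mono) (use assms in auto)
    finally show ?thesis by simp
  qed
  have "0 \<le> e\<^sup>2 * (1 + F\<^sup>2) * x\<^sup>2" by simp
  then show ?thesis unfolding thermoP_def using x4 t by linarith
qed

lemma cont: "isCont (thermoP F e) x"
  unfolding thermoP_def by (intro continuous_intros)

theorem mainTheorem2:
  fixes F :: real
  assumes "2 - sqrt 3 \<le> F" and "F < 2.4"
  shows "\<exists>\<epsilon>0 > 0. \<forall>\<epsilon>. 0 < \<epsilon> \<and> \<epsilon> < \<epsilon>0 \<longrightarrow>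
           (\<exists>Xp Xm. {X. thermoP F \<epsilon> X = 0} = {Xp, Xm} \<and> Xp > 0 \<and> Xm < 0 \<and>
              Xp - 1 \<in> {0<..<\<epsilon> * F} \<and> Xm + 1 \<in> {0<..<\<epsilon> * F})"
proof -
  have "sqrt 3 < 2" by (rule real_less_lsqrt) auto
  then have F0: "0 < F" using assms by simp
  define e0 where "e0 = min (1 / (8 * F)) (F / (1 + F\<^sup>2))"
  have "0 < 1 + F\<^sup>2" by (simp add: add_pos_nonneg)
  then have e0pos: "0 < e0" unfolding e0_def using F0 by simp
  show ?thesis
  proof (rule exI[of _ e0], intro conjI allI impI e0pos)
    fix e assume "0 < e \<and> e < e0"
    then have e: "0 < e" "e < e0" by auto
    have c1: "e * F < 1/8"
    proof -
      have "e < 1 / (8 * F)" using e unfolding e0_def by simp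
      then show ?thesis using F0 by (simp add: field_simps)
    qed
    have c2: "e * (1 + F\<^sup>2) < F"
    proof -
      have "e < F / (1 + F\<^sup>2)" using e unfolding e0_def by simp
      then show ?thesis using \<open>0 < 1 + F\<^sup>2\<close> by (simp add: field_simps)
    qed
    define t where "t = e * F"
    have t0: "0 < t" "t < 1/8" using c1 e F0 unfolding t_def by auto
    let ?a = "e\<^sup>2 * (1 + F\<^sup>2)"
    have a0: "0 < ?a" using e \<open>0 < 1 + F\<^sup>2\<close> by simp
    have P1: "thermoP F e 1 < 0"
    proof -
      have "0 < 2 * F * e" using F0 e by simp
      then show ?thesis unfolding thermoP_def using a0 by simp
    qed
    have P1t: "0 < thermoP F e (1 + t)"
    proof -
      have eq: "thermoP F e (1 + t) = 2*t + 4*t\<^sup>2 + 4*t^3 + t^4 - ?a * (1+t)\<^sup>2"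
        unfolding thermoP_def t_def by (simp add: algebra_simps power2_eq_square power3_eq_cube power4_eq_xxxx)
      have "(1+t)\<^sup>2 < 2" 
      proof -
        have "(1+t)*(1+t) < (9/8)*(9/8)" using t0 by (intro mult_strict_mono) auto
        then show ?thesis by (simp add: power2_eq_square)
      qed
      have "?a = e * (e * (1 + F\<^sup>2))" by (simp add: power2_eq_square)
      also have "\<dots> < e * F" using c2 e by simp
      finally have "?a < t" unfolding t_def .
      then have "?a * (1+t)\<^sup>2 < t * 2"
        using \<open>(1+t)\<^sup>2 < 2\<close> a0 by (intro mult_strict_mono) auto
      moreover have "0 \<le> 4*t\<^sup>2 + 4*t^3 + t^4" using t0 by simp
      ultimately show ?thesis unfolding eq by simp
    qed
    have Pm1: "0 < thermoP F e (-1)"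
    proof -
      have "?a = e * (e * (1 + F\<^sup>2))" by (simp add: power2_eq_square)
      also have "\<dots> < e * F" using c2 e by simp
      finally have "?a < e * F" .
      moreover have "0 < e * F" using e F0 by simp
      moreover have "2 * F * e = 2 * (e * F)" by simp
      ultimately have "?a < 2 * F * e" by linarith
      moreover have "0 < F * e" using F0 e by simp
      ultimately show ?thesis unfolding thermoP_def by simp
    qed
    have Pm1t: "thermoP F e (-1 + t) < 0"
    proof -
      have eq: "thermoP F e (-1 + t) = t * (-2 + 4*t - 4*t\<^sup>2 + t^3) - ?a * (1-t)\<^sup>2"
        unfolding thermoP_def t_def by (simp add: algebra_simps power2_eq_square power3_eq_cube power4_eq_xxxx)
      have "t^3 < 1" using t0 by (simp add: power_less_one_iff)
      moreover have "0 \<le> t\<^sup>2" by simp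
      ultimately have "-2 + 4*t - 4*t\<^sup>2 + t^3 < 0" using t0 by linarith
      then have "t * (-2 + 4*t - 4*t\<^sup>2 + t^3) < 0" using t0 by (simp add: mult_pos_neg)
      moreover have "0 \<le> ?a * (1-t)\<^sup>2" by simp
      ultimately show ?thesis unfolding eq by linarith
    qed
    obtain Xp where Xp: "1 \<le> Xp" "Xp \<le> 1 + t" "thermoP F e Xp = 0"
      using IVT[of "thermoP F e" 1 0 "1 + t"] P1 P1t t0 cont
      by auto
    obtain Xm where Xm: "-1 \<le> Xm" "Xm \<le> -1 + t" "thermoP F e Xm = 0"
      using IVT2[of "thermoP F e" "-1 + t" 0 "-1"] Pm1 Pm1t t0 cont
      by auto
    have Xp1: "Xp \<noteq> 1" using Xp P1 by auto
    have Xpt: "Xp \<noteq> 1 + t" using Xp P1t by auto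
    have Xm1: "Xm \<noteq> -1" using Xm Pm1 by auto
    have Xmt: "Xm \<noteq> -1 + t" using Xm Pm1t by auto
    show "\<exists>Xp Xm. {X. thermoP F e X = 0} = {Xp, Xm} \<and> Xp > 0 \<and> Xm < 0 \<and>
              Xp - 1 \<in> {0<..<e * F} \<and> Xm + 1 \<in> {0<..<e * F}"
    proof -
      have S: "{X. thermoP F e X = 0} = {Xp, Xm}"
      proof (rule equalityI)
        show "{X. thermoP F e X = 0} \<subseteq> {Xp, Xm}"
        proof
          fix X assume "X \<in> {X. thermoP F e X = 0}"
          then have PX: "thermoP F e X = 0" by simp
          have "\<not> \<bar>X\<bar> \<le> 1/2" using mid_neg[OF F0 e(1) c1] PX by fastforce
          then consider "1/2 < X" | "X < -1/2" by linarith
          then show "X \<in> {Xp, Xm}"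
          proof cases
            case 1
            have "X = Xp"
            proof (rule ccontr)
              assume "X \<noteq> Xp"
              then consider "X < Xp" | "Xp < X" by linarith
              then show False
                using mono_pos[OF F0 e(1) c1 c2, of X Xp] mono_pos[OF F0 e(1) c1 c2, of Xp X] 1 Xp PX
                by cases auto
            qed
            then show ?thesis by simp
          next
            case 2
            have "X = Xm"
            proof (rule ccontr)
              assume "X \<noteq> Xm"
              then consider "X < Xm" | "Xm < X" by linarith
              then show False
                using mono_neg[OF F0 e(1) c1 c2, of X Xm] mono_neg[OF F0 e(1) c1 c2, of Xm X] 2 Xm PX t0
                by cases auto
            qed
            then show ?thesis by simp
          qed
        qed
        show "{Xp, Xm} \<subseteq> {X. thermoP F e X = 0}" using Xp Xm by auto
      qed
      have "Xp - 1 \<in> {0<..<e * F}" "Xm + 1 \<in> {0<..<e * F}" "Xp > 0" "Xm < 0"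
        using Xp Xm Xp1 Xpt Xm1 Xmt t0 t_def by auto
      then show ?thesis using S by blast
    qed
  qed
qed

end
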